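(* Let $n\ge 2$ and $k\ge 1$. For all $i\in[0,k]$, $$\mathfrak{z}_i(n,k)=(k+1)\,\mathfrak{z}_i(n-1,k)+(i+1)\sum_{j=i+1}^{k}\mathfrak{z}_j(n-1,k).$$
   Context: A triword of size $n$ is a word $u=u_1\cdots u_n$ with $u_i\in\{0,1,2\}$, $u_1\ne 2$, and such that $u_i=0$ implies $u_j\neq 1$ for all $j>i$; $\mathsf{Tr}(n)$ is their set, ordered componentwise ($u\preccurlyeq v$ iff $u_i\le v_i$ for all $i$). A $k$-chain of $\mathsf{Tr}(n)$ is a sequence $[u^{(1)},\dots,u^{(k)}]$ of triwords of size $n$ with $u^{(1)}\preccurlyeq u^{(2)}\preccurlyeq\cdots\preccurlyeq u^{(k)}$ (repetitions allowed). For $i\in[0,k]$, $\mathcal{Z}_i(n,k)$ is the set of $k$-chains such that $u^{(r)}$ contains the letter $0$ for all $r\in[k-i]$ and $u^{(s)}$ does not contain the letter $0$ for all $s\in[k-i+1,k]$; $\mathfrak{z}_i(n,k):=\#\mathcal{Z}_i(n,k)$. *)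

theory Defs
  imports Main
begin

definition triword :: "nat \<Rightarrow> nat list \<Rightarrow> bool" where
  "triword n u \<longleftrightarrow> length u = n \<and> set u \<subseteq> {0,1,2} \<and>
     (n \<ge> 1 \<longrightarrow> u ! 0 \<noteq> 2) \<and>
     (\<forall>i<n. \<forall>j<n. i < j \<and> u ! i = 0 \<longrightarrow> u ! j \<noteq> 1)"

definition Tr :: "nat \<Rightarrow> nat list set" where
  "Tr n = {u. triword n u}"

definition wle :: "nat list \<Rightarrow> nat list \<Rightarrow> bool" where
  "wle u v \<longleftrightarrow> length u = length v \<and> (\<forall>i<length u. u ! i \<le> v ! i)"

text \<open>k-chains of Tr(n): lists [u1,...,uk] (0-indexed) with u1 \<preccurlyeq> ... \<preccurlyeq> uk.\<close>
definition chains :: "nat \<Rightarrow> nat \<Rightarrow> nat list list set" where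
  "chains n k = {c. length c = k \<and> (\<forall>r<k. c ! r \<in> Tr n) \<and>
                    (\<forall>r. Suc r < k \<longrightarrow> wle (c ! r) (c ! Suc r))}"

definition Zset :: "nat \<Rightarrow> nat \<Rightarrow> nat \<Rightarrow> nat list list set" where
  "Zset i n k = {c \<in> chains n k.
      (\<forall>r<k - i. 0 \<in> set (c ! r)) \<and> (\<forall>s. k - i \<le> s \<and> s < k \<longrightarrow> 0 \<notin> set (c ! s))}"

definition zfrak :: "nat \<Rightarrow> nat \<Rightarrow> nat \<Rightarrow> nat" where
  "zfrak i n k = card (Zset i n k)"

end

theory Submission
  imports Defs
begin

lemma triword_snoc:
  assumes "length u = m" "1 \<le> m"
  shows "triword (Suc m) (u @ [x]) \<longleftrightarrow> triword m u \<and> x \<le> 2 \<and> (0 \<in> set u \<longrightarrow> x \<noteq> 1)"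
proof
  assume H: "triword (Suc m) (u @ [x])"
  have s: "set u \<subseteq> {0,1,2}" "x \<in> {0,1,2}" using H by (auto simp: triword_def)
  have a: "u ! 0 \<noteq> 2" using H assms by (auto simp: triword_def nth_append)
  have b: "\<forall>i<m. \<forall>j<m. i < j \<and> u ! i = 0 \<longrightarrow> u ! j \<noteq> 1"
  proof (intro allI impI)
    fix i j assume "i < m" "j < m" "i < j \<and> u ! i = 0"
    then show "u ! j \<noteq> 1" using H assms unfolding triword_def
      by (metis less_SucI nth_append)
  qed
  have c: "0 \<in> set u \<longrightarrow> x \<noteq> 1"
  proof
    assume "0 \<in> set u"
    then obtain i where "i < m" "u ! i = 0" using assms by (auto simp: in_set_conv_nth)
    then show "x \<noteq> 1" using H assms unfolding triword_def
      by (metis lessI less_SucI nth_append nth_append_length)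
  qed
  show "triword m u \<and> x \<le> 2 \<and> (0 \<in> set u \<longrightarrow> x \<noteq> 1)"
    using s a b c assms by (auto simp: triword_def)
next
  assume H: "triword m u \<and> x \<le> 2 \<and> (0 \<in> set u \<longrightarrow> x \<noteq> 1)"
  have b: "\<forall>i<Suc m. \<forall>j<Suc m. i < j \<and> (u@[x]) ! i = 0 \<longrightarrow> (u@[x]) ! j \<noteq> 1"
  proof (intro allI impI)
    fix i j assume h: "i < Suc m" "j < Suc m" "i < j \<and> (u@[x]) ! i = 0"
    show "(u@[x]) ! j \<noteq> 1"
    proof (cases "j < m")
      case True
      then have "i < m" using h by simp
      then have "u ! i = 0" "(u@[x]) ! j = u ! j" using h True assms by (auto simp: nth_append)
      then show ?thesis using h H assms True \<open>i < m\<close> unfolding triword_def by metis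
    next
      case False
      then have "j = m" using h by simp
      moreover have "0 \<in> set u" using h \<open>j = m\<close> assms by (auto simp: nth_append in_set_conv_nth)
      ultimately show ?thesis using H assms by (simp add: nth_append)
    qed
  qed
  have s1: "set (u@[x]) \<subseteq> {0,1,2}" using H by (auto simp: triword_def)
  have s2: "(u@[x])!0 \<noteq> 2" using H assms by (simp add: triword_def nth_append)
  have s3: "length (u@[x]) = Suc m" using assms by simp
  show "triword (Suc m) (u @ [x])" unfolding triword_def using b s1 s2 s3 by blast
qed

lemma wle_snoc:
  assumes "length u = length v"
  shows "wle (u@[x]) (v@[y]) \<longleftrightarrow> wle u v \<and> x \<le> y"
  using assms unfolding wle_def
  by (auto simp: nth_append less_Suc_eq)

definition extc :: "nat list list \<Rightarrow> nat list \<Rightarrow> nat list list" where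
  "extc p a = map (\<lambda>(u,x). u @ [x]) (zip p a)"

lemma extc_len[simp]: "length (extc p a) = min (length p) (length a)"
  by (simp add: extc_def)

lemma extc_nth[simp]: "r < length p \<Longrightarrow> r < length a \<Longrightarrow> extc p a ! r = p ! r @ [a ! r]"
  by (simp add: extc_def)

lemma triword_len: "triword m u \<Longrightarrow> length u = m" by (simp add: triword_def)

lemma extc_chains:
  assumes "length p = k" "length a = k" "1 \<le> m"
  shows "extc p a \<in> chains (Suc m) k \<longleftrightarrow> p \<in> chains m k \<and>
     (\<forall>r<k. a!r \<le> 2 \<and> (0 \<in> set (p!r) \<longrightarrow> a!r \<noteq> 1)) \<and> (\<forall>r. Suc r < k \<longrightarrow> a!r \<le> a!Suc r)"
proof
  assume H: "extc p a \<in> chains (Suc m) k"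
  have t: "\<forall>r<k. triword (Suc m) (p!r @ [a!r])" using H assms by (simp add: chains_def Tr_def)
  have l: "\<forall>r<k. length (p!r) = m" using t triword_len by fastforce
  have t2: "\<forall>r<k. triword m (p!r) \<and> a!r \<le> 2 \<and> (0 \<in> set (p!r) \<longrightarrow> a!r \<noteq> 1)"
    using t l triword_snoc assms by blast
  have w: "\<forall>r. Suc r < k \<longrightarrow> wle (p!r @ [a!r]) (p!Suc r @ [a!Suc r])"
    using H assms by (simp add: chains_def)
  have w2: "\<forall>r. Suc r < k \<longrightarrow> wle (p!r) (p!Suc r) \<and> a!r \<le> a!Suc r"
    using w l wle_snoc by (metis Suc_lessD)
  show "p \<in> chains m k \<and>
     (\<forall>r<k. a!r \<le> 2 \<and> (0 \<in> set (p!r) \<longrightarrow> a!r \<noteq> 1)) \<and> (\<forall>r. Suc r < k \<longrightarrow> a!r \<le> a!Suc r)"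
    using t2 w2 assms by (simp add: chains_def Tr_def)
next
  assume H: "p \<in> chains m k \<and>
     (\<forall>r<k. a!r \<le> 2 \<and> (0 \<in> set (p!r) \<longrightarrow> a!r \<noteq> 1)) \<and> (\<forall>r. Suc r < k \<longrightarrow> a!r \<le> a!Suc r)"
  have t: "\<forall>r<k. triword m (p!r)" using H by (simp add: chains_def Tr_def)
  have l: "\<forall>r<k. length (p!r) = m" using t triword_len by fastforce
  have t2: "\<forall>r<k. triword (Suc m) (p!r @ [a!r])" using t l H triword_snoc assms by blast
  have w2: "\<forall>r. Suc r < k \<longrightarrow> wle (p!r @ [a!r]) (p!Suc r @ [a!Suc r])"
    using H l wle_snoc unfolding chains_def by (metis (no_types, lifting) Suc_lessD mem_Collect_eq)
  show "extc p a \<in> chains (Suc m) k" using t2 w2 assms by (simp add: chains_def Tr_def)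
qed

lemma threshold: "(\<forall>r. Suc r < k \<longrightarrow> P (Suc r) \<longrightarrow> P r) \<Longrightarrow> \<exists>m\<le>k. \<forall>r<k. P r \<longleftrightarrow> r < m"
proof (induction k)
  case 0
  then show ?case by simp
next
  case (Suc k)
  have "\<forall>r. Suc r < k \<longrightarrow> P (Suc r) \<longrightarrow> P r" using Suc.prems by simp
  then obtain m where m: "m \<le> k" "\<forall>r<k. P r \<longleftrightarrow> r < m" using Suc.IH by blast
  show ?case
  proof (cases "P k")
    case True
    have "P r" if "r \<le> k" for r
      using that
    proof (induction r rule: inc_induct)
      case base then show ?case using True .
    next
      case (step q) then show ?case using Suc.prems by simp
    qed
    then show ?thesis using True by (intro exI[of _ "Suc k"]) (auto simp: less_Suc_eq)
  next
    case False
    then show ?thesis using m by (intro exI[of _ m]) (auto simp: less_Suc_eq)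
  qed
qed

definition Bset :: "nat \<Rightarrow> nat \<Rightarrow> nat \<Rightarrow> nat list set" where
  "Bset i j k = {a. i \<le> j \<and> length a = k \<and> (\<forall>r<k. a!r \<le> 2) \<and> (\<forall>r. Suc r < k \<longrightarrow> a!r \<le> a!Suc r)
      \<and> (\<forall>r<k-j. a!r \<noteq> 1) \<and> (\<forall>r<k-i. r < k-j \<or> a!r = 0) \<and> (\<forall>s. k-i \<le> s \<and> s < k \<longrightarrow> a!s \<noteq> 0)}"

lemma decomp:
  assumes p: "p \<in> Zset j m k" and "j \<le> k" "i \<le> k" "length a = k" "1 \<le> m"
  shows "extc p a \<in> Zset i (Suc m) k \<longleftrightarrow> a \<in> Bset i j k"
proof -
  have pc: "p \<in> chains m k" using p by (simp add: Zset_def)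
  have lp: "length p = k" using pc by (simp add: chains_def)
  have z: "\<forall>r<k. 0 \<in> set (p!r) \<longleftrightarrow> r < k - j" using p unfolding Zset_def by (metis (lifting) mem_Collect_eq not_le)
  have ij: "i \<le> j \<longleftrightarrow> (\<forall>s. k-i \<le> s \<and> s < k \<longrightarrow> \<not> s < k-j)" using assms by auto
  have "extc p a \<in> Zset i (Suc m) k \<longleftrightarrow> extc p a \<in> chains (Suc m) k \<and>
     (\<forall>r<k-i. 0 \<in> set (p!r) \<or> a!r = 0) \<and> (\<forall>s. k-i \<le> s \<and> s < k \<longrightarrow> 0 \<notin> set (p!s) \<and> a!s \<noteq> 0)"
    unfolding Zset_def using lp assms by auto
  also have "\<dots> \<longleftrightarrow> (\<forall>r<k. a!r \<le> 2 \<and> (r < k - j \<longrightarrow> a!r \<noteq> 1)) \<and> (\<forall>r. Suc r < k \<longrightarrow> a!r \<le> a!Suc r) \<and>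
     (\<forall>r<k-i. r < k - j \<or> a!r = 0) \<and> (\<forall>s. k-i \<le> s \<and> s < k \<longrightarrow> \<not> s < k - j \<and> a!s \<noteq> 0)"
    using extc_chains[OF lp assms(4) assms(5)] pc z by auto
  also have "\<dots> \<longleftrightarrow> a \<in> Bset i j k"
    unfolding Bset_def using ij assms by auto
  finally show ?thesis .
qed

lemma Zset_unique_aux: "p \<in> Zset j m k \<Longrightarrow> p \<in> Zset j' m k \<Longrightarrow> j < j' \<Longrightarrow> j' \<le> k \<Longrightarrow> False"
proof -
  assume h: "p \<in> Zset j m k" "p \<in> Zset j' m k" "j < j'" "j' \<le> k"
  have s1: "k - j' < k - j" "k - j' < k" using h(3,4) by auto
  have "0 \<in> set (p ! (k - j'))" using h(1) s1 unfolding Zset_def by blast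
  moreover have "0 \<notin> set (p ! (k - j'))" using h(2) s1 unfolding Zset_def by blast
  ultimately show False by simp
qed

lemma Zset_unique: "p \<in> Zset j m k \<Longrightarrow> p \<in> Zset j' m k \<Longrightarrow> j \<le> k \<Longrightarrow> j' \<le> k \<Longrightarrow> j = j'"
  by (metis Zset_unique_aux linorder_neqE_nat)

lemma Zset_len: "p \<in> Zset j m k \<Longrightarrow> length p = k" by (simp add: Zset_def chains_def)
lemma Bset_len: "a \<in> Bset i j k \<Longrightarrow> length a = k" by (simp add: Bset_def)

lemma extc_inj:
  assumes "length p = k" "length a = k" "length p' = k" "length a' = k" "extc p a = extc p' a'"
  shows "p = p' \<and> a = a'"
proof -
  have "\<forall>r<k. p!r @ [a!r] = p'!r @ [a'!r]" using assms by (metis extc_nth)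
  then have "\<forall>r<k. p!r = p'!r \<and> a!r = a'!r" by simp
  then show ?thesis using assms by (simp add: nth_equalityI)
qed

lemma wle_zero: "wle u v \<Longrightarrow> 0 \<in> set v \<Longrightarrow> 0 \<in> set (u::nat list)"
  unfolding wle_def by (metis in_set_conv_nth le_zero_eq)

lemma Zset_bij:
  assumes "1 \<le> m" "i \<le> k"
  shows "bij_betw (\<lambda>(j,(p,a)). extc p a) (SIGMA j:{..k}. Zset j m k \<times> Bset i j k) (Zset i (Suc m) k)"
  unfolding bij_betw_def
proof (intro conjI)
  show "inj_on (\<lambda>(j,(p,a)). extc p a) (SIGMA j:{..k}. Zset j m k \<times> Bset i j k)"
  proof (rule inj_onI)
    fix x y
    assume hx: "x \<in> (SIGMA j:{..k}. Zset j m k \<times> Bset i j k)" and hy: "y \<in> (SIGMA j:{..k}. Zset j m k \<times> Bset i j k)"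
      and he: "(\<lambda>(j,(p,a)). extc p a) x = (\<lambda>(j,(p,a)). extc p a) y"
    obtain j p a where x: "x = (j,p,a)" by (metis prod_cases3)
    obtain j' p' a' where y: "y = (j',p',a')" by (metis prod_cases3)
    have h: "j \<in> {..k}" "p \<in> Zset j m k" "a \<in> Bset i j k" "j' \<in> {..k}" "p' \<in> Zset j' m k"
       "a' \<in> Bset i j' k" "extc p a = extc p' a'" using hx hy he x y by auto
    then have "p = p' \<and> a = a'" using extc_inj Zset_len Bset_len by metis
    moreover then have "j = j'" using h Zset_unique by auto
    ultimately show "x = y" using x y by simp
  qed
  show "(\<lambda>(j,(p,a)). extc p a) ` (SIGMA j:{..k}. Zset j m k \<times> Bset i j k) = Zset i (Suc m) k"
  proof
    show "(\<lambda>(j,(p,a)). extc p a) ` (SIGMA j:{..k}. Zset j m k \<times> Bset i j k) \<subseteq> Zset i (Suc m) k"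
    proof
      fix c assume "c \<in> (\<lambda>(j,(p,a)). extc p a) ` (SIGMA j:{..k}. Zset j m k \<times> Bset i j k)"
      then obtain j p a where h: "j \<in> {..k}" "p \<in> Zset j m k" "a \<in> Bset i j k" "c = extc p a" by auto
      then show "c \<in> Zset i (Suc m) k" using decomp[OF h(2) _ assms(2) Bset_len[OF h(3)] assms(1)] by simp
    qed
  next
    show "Zset i (Suc m) k \<subseteq> (\<lambda>(j,(p,a)). extc p a) ` (SIGMA j:{..k}. Zset j m k \<times> Bset i j k)"
    proof
      fix c assume c: "c \<in> Zset i (Suc m) k"
      have cc: "c \<in> chains (Suc m) k" using c by (simp add: Zset_def)
      have lc: "length c = k" using cc by (simp add: chains_def)
      have tc: "\<forall>r<k. triword (Suc m) (c!r)" using cc by (simp add: chains_def Tr_def)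
      define p where "p = map butlast c"
      define a where "a = map last c"
      have lp: "length p = k" "length a = k" using lc by (auto simp: p_def a_def)
      have ce: "c = extc p a"
      proof (rule nth_equalityI)
        show "length c = length (extc p a)" using lc lp by simp
        fix r assume "r < length c"
        then have "c!r \<noteq> []" using tc lc triword_len by fastforce
        then show "c ! r = extc p a ! r" using \<open>r < length c\<close> lc lp
          by (simp add: p_def a_def)
      qed
      have pc: "p \<in> chains m k" using extc_chains[OF lp assms(1)] cc ce by simp
      have anti: "\<forall>r. Suc r < k \<longrightarrow> 0 \<in> set (p ! Suc r) \<longrightarrow> 0 \<in> set (p!r)"
        using pc wle_zero unfolding chains_def by blast
      obtain q where q: "q \<le> k" "\<forall>r<k. 0 \<in> set (p!r) \<longleftrightarrow> r < q"
        using threshold[OF anti] by blast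
      have pz: "p \<in> Zset (k - q) m k" unfolding Zset_def using pc q by auto
      have "a \<in> Bset i (k - q) k" using decomp[OF pz _ assms(2) lp(2) assms(1)] c ce by simp
      then show "c \<in> (\<lambda>(j,(p,a)). extc p a) ` (SIGMA j:{..k}. Zset j m k \<times> Bset i j k)"
        using pz ce by (intro image_eqI[of _ _ "(k - q, p, a)"]) auto
    qed
  qed
qed

definition enc :: "nat \<Rightarrow> nat \<Rightarrow> nat \<Rightarrow> nat list" where
  "enc c0 c1 k = replicate c0 0 @ replicate c1 1 @ replicate (k - c0 - c1) 2"

lemma enc_len[simp]: "c0 + c1 \<le> k \<Longrightarrow> length (enc c0 c1 k) = k"
  by (simp add: enc_def)

lemma enc_nth: "c0 + c1 \<le> k \<Longrightarrow> r < k \<Longrightarrow>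
   enc c0 c1 k ! r = (if r < c0 then 0 else if r < c0 + c1 then 1 else 2)"
  by (auto simp: enc_def nth_append)

lemma enc_inj: "c0 + c1 \<le> k \<Longrightarrow> d0 + d1 \<le> k \<Longrightarrow> enc c0 c1 k = enc d0 d1 k \<Longrightarrow> c0 = d0 \<and> c1 = d1"
proof -
  assume h: "c0 + c1 \<le> k" "d0 + d1 \<le> k" "enc c0 c1 k = enc d0 d1 k"
  have "length (filter (\<lambda>x. x = 0) (enc c0 c1 k)) = c0" "length (filter (\<lambda>x. x = 1) (enc c0 c1 k)) = c1"
    by (simp_all add: enc_def filter_replicate)
  moreover have "length (filter (\<lambda>x. x = 0) (enc d0 d1 k)) = d0" "length (filter (\<lambda>x. x = 1) (enc d0 d1 k)) = d1"
    by (simp_all add: enc_def filter_replicate)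
  ultimately show ?thesis using h(3) by metis
qed

lemma sorted_enc: "set a \<subseteq> {0,1,2::nat} \<Longrightarrow> sorted a \<Longrightarrow> \<exists>c0 c1. c0 + c1 \<le> length a \<and> a = enc c0 c1 (length a)"
proof (induction a)
  case Nil
  then show ?case by (simp add: enc_def)
next
  case (Cons x xs)
  then obtain c0 c1 where c: "c0 + c1 \<le> length xs" "xs = enc c0 c1 (length xs)" by auto
  have ge: "\<forall>y\<in>set xs. x \<le> y" using Cons.prems by simp
  have "x = 0 \<or> x = 1 \<or> x = 2" using Cons.prems by auto
  then show ?case
  proof (elim disjE)
    assume "x = 0"
    then show ?thesis using c by (intro exI[of _ "Suc c0"] exI[of _ c1]) (simp add: enc_def)
  next
    assume x1: "x = 1"
    have "c0 = 0"
    proof (rule ccontr)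
      assume "c0 \<noteq> 0"
      then have "0 \<in> set (enc c0 c1 (length xs))" by (simp add: enc_def)
      then have "0 \<in> set xs" using c(2) by simp
      then show False using ge x1 by auto
    qed
    then show ?thesis using c x1 by (intro exI[of _ 0] exI[of _ "Suc c1"]) (simp add: enc_def)
  next
    assume x2: "x = 2"
    have "\<forall>y\<in>set (x # xs). y = 2"
    proof
      fix y assume "y \<in> set (x # xs)"
      then have "y \<in> {0,1,2}" "x \<le> y" using ge Cons.prems(1) by auto
      then show "y = 2" using x2 by auto
    qed
    then have e1: "replicate (length (x # xs)) 2 = x # xs" by (rule replicate_length_same)
    have e2: "enc 0 0 (length (x # xs)) = replicate (length (x # xs)) 2" by (simp only: enc_def) simp
    show ?thesis using e1 e2 by (intro exI[of _ 0] exI[of _ 0]) simp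
  qed
qed

lemma Bset_enc: "a \<in> Bset i j k \<Longrightarrow> \<exists>c0 c1. c0 + c1 \<le> k \<and> a = enc c0 c1 k"
proof -
  assume h: "a \<in> Bset i j k"
  have l: "length a = k" using h by (simp add: Bset_def)
  have "sorted a" using h by (simp add: Bset_def sorted_iff_nth_Suc)
  moreover have "set a \<subseteq> {0,1,2}"
  proof
    fix x assume "x \<in> set a"
    then obtain r where "r < k" "a ! r = x" using l by (auto simp: in_set_conv_nth)
    then have "x \<le> 2" using h by (auto simp: Bset_def)
    then show "x \<in> {0,1,2}" by auto
  qed
  ultimately show ?thesis using sorted_enc l by metis
qed

lemma Bset_lt: "j < i \<Longrightarrow> Bset i j k = {}"
  by (auto simp: Bset_def)

lemma Bset_same:
  assumes "i \<le> k"
  shows "Bset i i k = (\<lambda>t. if t < k - i then enc t 0 k else enc (k - i) (t - (k - i)) k) ` {..k}"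
proof
  show "Bset i i k \<subseteq> (\<lambda>t. if t < k - i then enc t 0 k else enc (k - i) (t - (k - i)) k) ` {..k}"
  proof
    fix a assume a: "a \<in> Bset i i k"
    obtain c0 c1 where c: "c0 + c1 \<le> k" "a = enc c0 c1 k" using Bset_enc[OF a] by blast
    have A: "\<forall>r<k-i. a!r \<noteq> 1" "\<forall>s. k-i \<le> s \<and> s < k \<longrightarrow> a!s \<noteq> 0" using a by (auto simp: Bset_def)
    have c1: "c1 = 0 \<or> c0 \<ge> k - i"
    proof (rule ccontr)
      assume "\<not> (c1 = 0 \<or> c0 \<ge> k - i)"
      then have "c0 < k - i" "c1 > 0" by auto
      then have "a ! c0 = 1" using c enc_nth by simp
      then show False using A(1) \<open>c0 < k - i\<close> by blast
    qed
    have c0: "c0 \<le> k - i"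
    proof (cases "i = 0")
      case True then show ?thesis using c by simp
    next
      case False
      then have "k - i < k" using assms by simp
      then have "a ! (k - i) \<noteq> 0" using A(2) by blast
      then show ?thesis using c enc_nth \<open>k - i < k\<close> by (metis not_less)
    qed
    show "a \<in> (\<lambda>t. if t < k - i then enc t 0 k else enc (k - i) (t - (k - i)) k) ` {..k}"
    proof (cases "c0 < k - i")
      case True
      then have "c1 = 0" using c1 by simp
      then show ?thesis using True c by (intro image_eqI[of _ _ c0]) auto
    next
      case False
      then have "c0 = k - i" using c0 by simp
      then show ?thesis using c by (intro image_eqI[of _ _ "c0 + c1"]) auto
    qed
  qed
next
  show "(\<lambda>t. if t < k - i then enc t 0 k else enc (k - i) (t - (k - i)) k) ` {..k} \<subseteq> Bset i i k"
  proof
    fix a assume "a \<in> (\<lambda>t. if t < k - i then enc t 0 k else enc (k - i) (t - (k - i)) k) ` {..k}"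
    then obtain t where t: "t \<le> k" "a = (if t < k - i then enc t 0 k else enc (k - i) (t - (k - i)) k)" by auto
    show "a \<in> Bset i i k"
    proof (cases "t < k - i")
      case True
      then have "a = enc t 0 k" using t by simp
      then show ?thesis using True t unfolding Bset_def by (auto simp: enc_nth)
    next
      case False
      then have "a = enc (k - i) (t - (k - i)) k" using t by simp
      then show ?thesis using False t assms unfolding Bset_def by (auto simp: enc_nth)
    qed
  qed
qed

lemma Bset_same_card:
  assumes "i \<le> k"
  shows "card (Bset i i k) = k + 1"
proof -
  define f where "f = (\<lambda>t. if t < k - i then enc t 0 k else enc (k - i) (t - (k - i)) k)"
  have "inj_on f {..k}" unfolding f_def
  proof (rule inj_onI)
    fix t t' assume h: "t \<in> {..k}" "t' \<in> {..k}"
      "(if t < k - i then enc t 0 k else enc (k - i) (t - (k - i)) k) = (if t' < k - i then enc t' 0 k else enc (k - i) (t' - (k - i)) k)"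
    have tk: "t \<le> k" "t' \<le> k" using h by auto
    show "t = t'"
    proof (cases "t < k - i"; cases "t' < k - i")
      assume "t < k - i" "t' < k - i"
      then show ?thesis using h tk enc_inj[of t 0 k t' 0] by simp
    next
      assume a1: "t < k - i" "\<not> t' < k - i"
      then have "enc t 0 k = enc (k - i) (t' - (k - i)) k" using h by simp
      then have "t = k - i" using enc_inj[of t 0 k "k - i" "t' - (k - i)"] tk a1 by simp
      then show ?thesis using a1 by simp
    next
      assume a1: "\<not> t < k - i" "t' < k - i"
      then have "enc t' 0 k = enc (k - i) (t - (k - i)) k" using h by simp
      then have "t' = k - i" using enc_inj[of t' 0 k "k - i" "t - (k - i)"] tk a1 by simp
      then show ?thesis using a1 by simp
    next
      assume a1: "\<not> t < k - i" "\<not> t' < k - i"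
      then have "enc (k - i) (t - (k - i)) k = enc (k - i) (t' - (k - i)) k" using h by simp
      then have "t - (k - i) = t' - (k - i)" using enc_inj[of "k - i" "t - (k - i)" k "k - i" "t' - (k - i)"] tk a1 by simp
      then show ?thesis using a1 by simp
    qed
  qed
  then have "card (f ` {..k}) = card {..k}" by (rule card_image)
  then show ?thesis using Bset_same[OF assms] unfolding f_def[symmetric] by simp
qed

lemma Bset_gt:
  assumes "i < j" "j \<le> k"
  shows "Bset i j k = (\<lambda>t. enc (k - i) t k) ` {..i}"
proof
  show "Bset i j k \<subseteq> (\<lambda>t. enc (k - i) t k) ` {..i}"
  proof
    fix a assume a: "a \<in> Bset i j k"
    obtain c0 c1 where c: "c0 + c1 \<le> k" "a = enc c0 c1 k" using Bset_enc[OF a] by blast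
    have A: "\<forall>r<k-i. r < k-j \<or> a!r = 0" "\<forall>s. k-i \<le> s \<and> s < k \<longrightarrow> a!s \<noteq> 0" using a by (auto simp: Bset_def)
    have c0: "c0 \<le> k - i"
    proof (cases "i = 0")
      case True then show ?thesis using c by simp
    next
      case False
      then have "k - i < k" using assms by simp
      then have "a ! (k - i) \<noteq> 0" using A(2) by blast
      then show ?thesis using c enc_nth \<open>k - i < k\<close> by (metis not_less)
    qed
    have "k - i - 1 < k - i" "\<not> k - i - 1 < k - j" using assms by auto
    then have "a ! (k - i - 1) = 0" using A(1) by blast
    moreover have "k - i - 1 < k" using assms by simp
    ultimately have "k - i - 1 < c0" using enc_nth[OF c(1), of "k - i - 1"] c(2)
      by (simp split: if_splits)
    then have "c0 = k - i" using c0 by simp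
    then show "a \<in> (\<lambda>t. enc (k - i) t k) ` {..i}" using c assms by (intro image_eqI[of _ _ c1]) auto
  qed
next
  show "(\<lambda>t. enc (k - i) t k) ` {..i} \<subseteq> Bset i j k"
  proof
    fix a assume "a \<in> (\<lambda>t. enc (k - i) t k) ` {..i}"
    then obtain t where t: "t \<le> i" "a = enc (k - i) t k" by auto
    have le: "k - i + t \<le> k" using t assms by simp
    have n: "\<forall>r<k. a!r = (if r < k - i then 0 else if r < k - i + t then 1 else 2)"
      using enc_nth[OF le] t by simp
    have l: "length a = k" using t le by simp
    show "a \<in> Bset i j k" unfolding Bset_def using n l assms by auto
  qed
qed

lemma Bset_gt_card:
  assumes "i < j" "j \<le> k"
  shows "card (Bset i j k) = i + 1"
proof -
  have "inj_on (\<lambda>t. enc (k - i) t k) {..i}"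
  proof (rule inj_onI)
    fix t t' assume h: "t \<in> {..i}" "t' \<in> {..i}" "enc (k - i) t k = enc (k - i) t' k"
    then show "t = t'" using enc_inj[of "k - i" t k "k - i" t'] assms by simp
  qed
  then show ?thesis using Bset_gt[OF assms] by (simp add: card_image)
qed

lemma finite_chains: "finite (chains m k)"
proof (rule finite_subset)
  show "chains m k \<subseteq> {c. set c \<subseteq> {u. set u \<subseteq> {0,1,2} \<and> length u = m} \<and> length c = k}"
  proof
    fix c assume c: "c \<in> chains m k"
    have "set c \<subseteq> {u. set u \<subseteq> {0,1,2} \<and> length u = m}"
    proof
      fix u assume "u \<in> set c"
      then obtain r where "r < k" "c ! r = u" using c by (auto simp: in_set_conv_nth chains_def)
      then have "triword m u" using c by (auto simp: chains_def Tr_def)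
      then show "u \<in> {u. set u \<subseteq> {0,1,2} \<and> length u = m}" by (simp add: triword_def)
    qed
    then show "c \<in> {c. set c \<subseteq> {u. set u \<subseteq> {0,1,2} \<and> length u = m} \<and> length c = k}"
      using c by (simp add: chains_def)
  qed
  show "finite {c. set c \<subseteq> {u. set u \<subseteq> {0,1,2::nat} \<and> length u = m} \<and> length c = k}"
    by (intro finite_lists_length_eq) (simp add: finite_lists_length_eq)
qed

lemma finite_Zset: "finite (Zset j m k)"
  by (rule finite_subset[OF _ finite_chains]) (auto simp: Zset_def)

lemma finite_Bset: "finite (Bset i j k)"
proof (rule finite_subset)
  show "Bset i j k \<subseteq> {a. set a \<subseteq> {0,1,2::nat} \<and> length a = k}"
  proof
    fix a assume a: "a \<in> Bset i j k"
    have "set a \<subseteq> {0,1,2}"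
    proof
      fix x assume "x \<in> set a"
      then obtain r where "r < k" "a ! r = x" using a by (auto simp: in_set_conv_nth Bset_def)
      then have "x \<le> 2" using a by (auto simp: Bset_def)
      then show "x \<in> {0,1,2}" by auto
    qed
    then show "a \<in> {a. set a \<subseteq> {0,1,2::nat} \<and> length a = k}" using a by (simp add: Bset_def)
  qed
  show "finite {a. set a \<subseteq> {0,1,2::nat} \<and> length a = k}" by (simp add: finite_lists_length_eq)
qed

lemma Bset_card: "i \<le> k \<Longrightarrow> j \<le> k \<Longrightarrow> card (Bset i j k) = (if j < i then 0 else if j = i then k + 1 else i + 1)"
  using Bset_lt Bset_same_card Bset_gt_card by auto

theorem proposition3p6:
  fixes n k i :: nat
  assumes "n \<ge> 2" and "k \<ge> 1" and "i \<le> k"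
  shows "zfrak i n k = (k + 1) * zfrak i (n - 1) k + (i + 1) * (\<Sum>j = i + 1..k. zfrak j (n - 1) k)"
proof -
  define m where "m = n - 1"
  have n: "n = Suc m" "1 \<le> m" using assms by (auto simp: m_def)
  define g where "g j = zfrak j m k * card (Bset i j k)" for j
  have "zfrak i n k = card (SIGMA j:{..k}. Zset j m k \<times> Bset i j k)"
    unfolding zfrak_def n(1) using bij_betw_same_card[OF Zset_bij[OF n(2) assms(3)]] by simp
  also have "\<dots> = (\<Sum>j\<in>{..k}. g j)"
    by (simp add: g_def zfrak_def finite_Zset finite_Bset card_cartesian_product)
  also have "\<dots> = (\<Sum>j\<in>{0..<i}. g j) + (\<Sum>j\<in>{i..<Suc k}. g j)"
  proof -
    have "{..k} = {0..<i} \<union> {i..<Suc k}" using assms(3) by auto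
    then show ?thesis by (simp add: sum.union_disjoint ivl_disj_int(15))
  qed
  also have "(\<Sum>j\<in>{0..<i}. g j) = 0"
    using assms(3) by (simp add: g_def Bset_card)
  also have "(\<Sum>j\<in>{i..<Suc k}. g j) = g i + (\<Sum>j\<in>{Suc i..<Suc k}. g j)"
    using assms(3) by (intro sum.atLeast_Suc_lessThan) simp
  also have "g i = (k + 1) * zfrak i m k" using assms(3) by (simp add: g_def Bset_card)
  also have "(\<Sum>j\<in>{Suc i..<Suc k}. g j) = (\<Sum>j = i + 1..k. (i + 1) * zfrak j m k)"
    using assms(3) by (intro sum.cong) (auto simp: g_def Bset_card)
  also have "\<dots> = (i + 1) * (\<Sum>j = i + 1..k. zfrak j m k)"
    by (simp add: sum_distrib_left)
  finally show ?thesis by (simp add: m_def)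
qed

end
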